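(* Let $\mathcal R$ be a reaction network and $\mathcal U=\mathcal U_1\cup\mathcal U_2\subseteq\mathcal S$ with $\mathcal U_1\cap\mathcal U_2=\emptyset$. Suppose $\mathcal U_1$ is eliminable in $\mathcal R$ with respect to $\mathcal F_1\subseteq\mathcal R_{\mathcal U_1}$, $\mathcal U_2$ is eliminable in $\mathcal R$ with respect to $\mathcal F_2\subseteq\mathcal R_{\mathcal U_2}$, and $(\mathcal R_{\mathcal U_1}\cup\mathcal R_{\mathcal U_1}')\cap(\mathcal R_{\mathcal U_2}\cup\mathcal R_{\mathcal U_2}')=\emptyset$. Then $\mathcal U$ is eliminable in $\mathcal R$ with respect to $\mathcal F=\mathcal F_1\cup\mathcal F_2$.
   Context: Species $S_1,\dots,S_n$ are the unit vectors of $\mathbb{N}_0^n$ and $\mathcal S=\{S_1,\dots,S_n\}$; for $x\in\mathbb{N}_0^n$, $\mathrm{supp}(x)=\{S_k: x^k>0\}$. A reaction network (RN) is a (possibly infinite) subset $\mathcal R\subseteq\mathbb{N}_0^n\times\mathbb{N}_0^n$ containing no $(y,y')$ with $y=y'$; elements $(y,y')$ are reactions $y\to y'$ with reactant $y$ and product $y'$. For $r_1=(y_1,y_1'),\ r_2=(y_2,y_2')$ define $r_1\oplus r_2=(y_1+0\vee(y_2-y_1'),\ y_2'+0\vee(y_1'-y_2))$ ($\vee$ componentwise maximum); it is associative. $\mathrm{cl}(A)$ is the set of all finite $\oplus$-sums of elements of $A$, including $(0,0)$. For $\mathcal U\subseteq\mathcal S$ and a set $B\subseteq\mathbb{N}_0^n\times\mathbb{N}_0^n$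 write $B_{\mathcal U}=\{(y,y')\in B:\mathrm{supp}(y)\cap\mathcal U\neq\emptyset\}$ and $B_{\mathcal U}'=\{(y,y')\in B:\mathrm{supp}(y')\cap\mathcal U\neq\emptyset\}$. Set $\overline{\mathcal R}=\mathrm{cl}(\mathcal R)$ and $\overline{\mathcal R}_0=\overline{\mathcal R}\setminus(\overline{\mathcal R}_{\mathcal U}\cup\overline{\mathcal R}_{\mathcal U}')$ (for the relevant $\mathcal U$). A set $\mathcal U\subseteq\mathcal S$ is eliminable in $\mathcal R$ with respect to $\mathcal F\subseteq\mathcal R_{\mathcal U}$ if for every $r_0\in\mathcal R_{\mathcal U}'$ and every $r_1\in\mathrm{cl}(\mathcal F)$ with $r_0\oplus r_1\notin\overline{\mathcal R}_{\mathcal U}$ there exists $r_2\in\mathrm{cl}(\mathcal F)$ with $r_0\oplus r_1\oplus r_2\in\overline{\mathcal R}_0$. *)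

theory Defs
  imports Main
begin

(* Species are indexed by a finite type 's (species S_k <-> index k);
   complexes are vectors in N_0^S, i.e. functions 's => nat. *)
type_synonym 's complex = "'s \<Rightarrow> nat"
type_synonym 's reaction = "'s complex \<times> 's complex"

definition supp :: "'s complex \<Rightarrow> 's set" where
  "supp x = {k. x k > 0}"

definition reaction_network :: "'s reaction set \<Rightarrow> bool" where
  "reaction_network R \<longleftrightarrow> (\<forall>(y, y') \<in> R. y \<noteq> y')"

(* r1 (+) r2 = (y1 + 0 \<or> (y2 - y1'), y2' + 0 \<or> (y1' - y2)); truncated nat
   subtraction a - b equals max 0 (a - b) componentwise *)
definition oplus :: "'s reaction \<Rightarrow> 's reaction \<Rightarrow> 's reaction" (infixl "\<oplus>" 65) where
  "r1 \<oplus> r2 = (case r1 of (y1, y1') \<Rightarrow> case r2 of (y2, y2') \<Rightarrow>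
      (\<lambda>k. y1 k + max 0 (y2 k - y1' k), \<lambda>k. y2' k + max 0 (y1' k - y2 k)))"

inductive_set cl :: "'s reaction set \<Rightarrow> 's reaction set" for A where
  cl_zero: "(\<lambda>_. 0, \<lambda>_. 0) \<in> cl A"
| cl_step: "r \<in> cl A \<Longrightarrow> a \<in> A \<Longrightarrow> r \<oplus> a \<in> cl A"

definition react_U :: "'s set \<Rightarrow> 's reaction set \<Rightarrow> 's reaction set" where
  "react_U U B = {(y, y') \<in> B. supp y \<inter> U \<noteq> {}}"

definition prod_U :: "'s set \<Rightarrow> 's reaction set \<Rightarrow> 's reaction set" where
  "prod_U U B = {(y, y') \<in> B. supp y' \<inter> U \<noteq> {}}"

definition cl0 :: "'s set \<Rightarrow> 's reaction set \<Rightarrow> 's reaction set" where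
  "cl0 U R = cl R - (react_U U (cl R) \<union> prod_U U (cl R))"

definition eliminable :: "'s set \<Rightarrow> 's reaction set \<Rightarrow> 's reaction set \<Rightarrow> bool" where
  "eliminable U R F \<longleftrightarrow> F \<subseteq> react_U U R \<and>
     (\<forall>r0 \<in> prod_U U R. \<forall>r1 \<in> cl F. r0 \<oplus> r1 \<notin> react_U U (cl R) \<longrightarrow>
        (\<exists>r2 \<in> cl F. r0 \<oplus> r1 \<oplus> r2 \<in> cl0 U R))"

end

theory Submission
  imports Defs
begin

lemma oplus_fst[simp]: "fst (r1 \<oplus> r2) k = fst r1 k + (fst r2 k - snd r1 k)"
  by (cases r1, cases r2) (simp add: oplus_def)

lemma oplus_snd[simp]: "snd (r1 \<oplus> r2) k = snd r2 k + (snd r1 k - fst r2 k)"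
  by (cases r1, cases r2) (simp add: oplus_def)

lemma reqI: "(\<And>k. fst a k = fst b k) \<Longrightarrow> (\<And>k. snd a k = snd b k) \<Longrightarrow> a = (b::'s reaction)"
  by (rule prod_eqI) (auto intro: ext)

lemma oplus_assoc: "a \<oplus> (b \<oplus> c) = (a \<oplus> b) \<oplus> (c::'s reaction)"
  by (rule reqI; simp; arith)

lemma oplus_zero_r: "a \<oplus> (\<lambda>_. 0, \<lambda>_. 0) = a"
  by (rule reqI) simp_all

lemma oplus_zero_l: "(\<lambda>_. 0, \<lambda>_. 0) \<oplus> a = a"
  by (rule reqI) simp_all

lemma cl_mono: "A \<subseteq> B \<Longrightarrow> r \<in> cl A \<Longrightarrow> r \<in> cl B"
proof -
  assume "A \<subseteq> B"
  show "r \<in> cl A \<Longrightarrow> r \<in> cl B"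
    by (induction r rule: cl.induct) (use \<open>A \<subseteq> B\<close> in \<open>auto intro: cl.intros\<close>)
qed

lemma cl_closed: "r \<in> cl A \<Longrightarrow> x \<in> cl A \<Longrightarrow> x \<oplus> r \<in> cl A"
proof (induction r rule: cl.induct)
  case cl_zero then show ?case by (simp add: oplus_zero_r)
next
  case (cl_step r a) then show ?case by (metis oplus_assoc cl.cl_step)
qed

lemma base_cl: "a \<in> A \<Longrightarrow> a \<in> cl A"
  by (metis cl.cl_step cl.cl_zero oplus_zero_l)

lemma supp_meet: "supp y \<inter> U \<noteq> {} \<longleftrightarrow> (\<exists>k\<in>U. y k > 0)"
  by (auto simp: supp_def)

lemma key1:
  assumes "r \<in> cl (F1 \<union> F2)"
    and F1: "\<And>a k. a \<in> F1 \<Longrightarrow> k \<in> U2 \<Longrightarrow> snd a k = 0"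
    and F2: "\<And>a. a \<in> F2 \<Longrightarrow> \<exists>k\<in>U2. fst a k > 0"
  shows "(\<forall>k\<in>U2. snd x k = 0) \<Longrightarrow> (r \<in> cl F1 \<and> (\<forall>k\<in>U2. snd (x \<oplus> r) k = 0)) \<or> (\<exists>k\<in>U2. fst (x \<oplus> r) k > 0)"
  using assms(1)
proof (induction r rule: cl.induct)
  case cl_zero then show ?case by (simp add: oplus_zero_r cl.cl_zero)
next
  case (cl_step r a)
  have e: "x \<oplus> (r \<oplus> a) = (x \<oplus> r) \<oplus> a" by (rule oplus_assoc)
  from cl_step.IH[OF cl_step.prems] show ?case
  proof
    assume h: "r \<in> cl F1 \<and> (\<forall>k\<in>U2. snd (x \<oplus> r) k = 0)"
    show ?case
    proof (cases "a \<in> F1")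
      case True
      then show ?thesis using h F1 by (auto simp: e intro: cl.cl_step)
    next
      case False
      then have "a \<in> F2" using cl_step.hyps by auto
      then obtain k where "k \<in> U2" "fst a k > 0" using F2 by blast
      then show ?thesis using h by (auto simp: e)
    qed
  next
    assume "\<exists>k\<in>U2. fst (x \<oplus> r) k > 0"
    then show ?case by (auto simp: e)
  qed
qed

lemma key2:
  assumes "r \<in> cl F1"
    and F1: "\<And>a k. a \<in> F1 \<Longrightarrow> k \<in> U2 \<Longrightarrow> snd a k = 0 \<and> fst a k = 0"
  shows "(\<forall>k\<in>U2. snd x k = 0 \<and> fst x k = 0) \<Longrightarrow> (\<forall>k\<in>U2. snd (x \<oplus> r) k = 0 \<and> fst (x \<oplus> r) k = 0)"
  using assms(1)
proof (induction r rule: cl.induct)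
  case cl_zero then show ?case by (simp add: oplus_zero_r)
next
  case (cl_step r a)
  then show ?case using F1[of a] by (simp add: oplus_assoc)
qed

lemma half:
  assumes "U1 \<inter> U2 = {}"
    and F1s: "F1 \<subseteq> react_U U1 R" and F2s: "F2 \<subseteq> react_U U2 R"
    and el: "eliminable U1 R F1"
    and disj: "(react_U U1 R \<union> prod_U U1 R) \<inter> (react_U U2 R \<union> prod_U U2 R) = {}"
    and r0: "r0 \<in> prod_U U1 R" and r1: "r1 \<in> cl (F1 \<union> F2)"
    and nr: "r0 \<oplus> r1 \<notin> react_U (U1 \<union> U2) (cl R)"
  shows "\<exists>r2 \<in> cl (F1 \<union> F2). r0 \<oplus> r1 \<oplus> r2 \<in> cl0 (U1 \<union> U2) R"
proof -
  have F1z: "snd a k = 0 \<and> fst a k = 0" if "a \<in> F1" "k \<in> U2" for a k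
  proof -
    have "a \<in> react_U U1 R" using that F1s by auto
    then have "a \<notin> react_U U2 R" "a \<notin> prod_U U2 R" using disj by auto
    moreover have "a \<in> R" using \<open>a \<in> react_U U1 R\<close> by (auto simp: react_U_def)
    ultimately show ?thesis using that(2)
      by (cases a) (auto simp: react_U_def prod_U_def supp_meet)
  qed
  have F2p: "\<exists>k\<in>U2. fst a k > 0" if "a \<in> F2" for a
    using that F2s by (cases a) (auto simp: react_U_def supp_meet)
  have r0R: "r0 \<in> R" using r0 by (auto simp: prod_U_def)
  have r0z: "\<forall>k\<in>U2. snd r0 k = 0"
  proof -
    have "r0 \<notin> prod_U U2 R" using r0 disj by auto
    then show ?thesis using r0R by (cases r0) (auto simp: prod_U_def supp_meet)
  qed
  have F12R: "F1 \<union> F2 \<subseteq> R" using F1s F2s by (auto simp: react_U_def)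
  have x_cl: "r0 \<oplus> r1 \<in> cl R"
    using cl_closed[OF cl_mono[OF F12R r1] base_cl[OF r0R]] .
  have nofst: "\<forall>k\<in>U1 \<union> U2. fst (r0 \<oplus> r1) k = 0"
    using nr x_cl by (cases "r0 \<oplus> r1") (auto simp: react_U_def supp_meet)
  have "(r1 \<in> cl F1 \<and> (\<forall>k\<in>U2. snd (r0 \<oplus> r1) k = 0)) \<or> (\<exists>k\<in>U2. fst (r0 \<oplus> r1) k > 0)"
    by (rule key1[OF r1 _ F2p r0z]) (simp add: F1z)
  moreover have "\<not> (\<exists>k\<in>U2. fst (r0 \<oplus> r1) k > 0)" using nofst by (metis UnI2 less_irrefl)
  ultimately have h1: "r1 \<in> cl F1" and h2: "\<forall>k\<in>U2. snd (r0 \<oplus> r1) k = 0" by blast+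
  have "r0 \<oplus> r1 \<notin> react_U U1 (cl R)"
    using nofst by (cases "r0 \<oplus> r1") (auto simp: react_U_def supp_meet)
  then obtain r2 where r2: "r2 \<in> cl F1" and c: "r0 \<oplus> r1 \<oplus> r2 \<in> cl0 U1 R"
    using el r0 h1 unfolding eliminable_def by blast
  have z: "\<forall>k\<in>U2. snd (r0 \<oplus> r1 \<oplus> r2) k = 0 \<and> fst (r0 \<oplus> r1 \<oplus> r2) k = 0"
    by (rule key2[OF r2 F1z]) (use h2 nofst in auto)
  have "r0 \<oplus> r1 \<oplus> r2 \<in> cl0 (U1 \<union> U2) R"
    using c z by (cases "r0 \<oplus> r1 \<oplus> r2") (auto simp: cl0_def react_U_def prod_U_def supp_meet)
  moreover have "r2 \<in> cl (F1 \<union> F2)" using cl_mono[OF _ r2] by blast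
  ultimately show ?thesis by blast
qed

theorem proposition4p6:
  fixes R F1 F2 :: "('s::finite) reaction set" and U1 U2 :: "'s set"
  assumes "reaction_network R"
    and "U1 \<inter> U2 = {}"
    and "F1 \<subseteq> react_U U1 R" and "F2 \<subseteq> react_U U2 R"
    and "eliminable U1 R F1" and "eliminable U2 R F2"
    and "(react_U U1 R \<union> prod_U U1 R) \<inter> (react_U U2 R \<union> prod_U U2 R) = {}"
  shows "eliminable (U1 \<union> U2) R (F1 \<union> F2)"
  unfolding eliminable_def
proof (intro conjI ballI impI)
  show "F1 \<union> F2 \<subseteq> react_U (U1 \<union> U2) R"
    using assms(3,4) by (auto simp: react_U_def)
next
  fix r0 r1
  assume r0: "r0 \<in> prod_U (U1 \<union> U2) R" and r1: "r1 \<in> cl (F1 \<union> F2)"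
    and nr: "r0 \<oplus> r1 \<notin> react_U (U1 \<union> U2) (cl R)"
  have "r0 \<in> prod_U U1 R \<or> r0 \<in> prod_U U2 R"
    using r0 by (auto simp: prod_U_def)
  then show "\<exists>r2\<in>cl (F1 \<union> F2). r0 \<oplus> r1 \<oplus> r2 \<in> cl0 (U1 \<union> U2) R"
  proof
    assume "r0 \<in> prod_U U1 R"
    then show ?thesis using half[OF assms(2,3,4,5,7) _ r1 nr] by blast
  next
    assume h: "r0 \<in> prod_U U2 R"
    have a: "U2 \<inter> U1 = {}" using assms(2) by auto
    have b: "(react_U U2 R \<union> prod_U U2 R) \<inter> (react_U U1 R \<union> prod_U U1 R) = {}"
      using assms(7) by auto
    have r1': "r1 \<in> cl (F2 \<union> F1)" using r1 by (simp add: Un_commute)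
    have nr': "r0 \<oplus> r1 \<notin> react_U (U2 \<union> U1) (cl R)" using nr by (simp add: Un_commute)
    show ?thesis using half[OF a assms(4,3,6) b h r1' nr'] by (simp add: Un_commute)
  qed
qed

end
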